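(* Let $R$ be a real $d\times d$ matrix all of whose eigenvalues $\lambda$ satisfy $|\lambda|>1$, let $B\subset\mathbb{R}^d$ be finite with $\#B\ge2$, and let $\tau_b(x)=R^{-1}(x+b)$ for $b\in B$, so $\tau_b^{-1}(y)=Ry-b$. Then for every $x\in\mathbb{R}^d$ and $n\in\mathbb{N}$, the set $\{\tau_{\omega_n}^{-1}\cdots\tau_{\omega_1}^{-1}x:\omega_1,\dots,\omega_n\in B\}$ has at least $n$ elements, and the set $\{\tau_{\omega_n}\cdots\tau_{\omega_1}x:\omega_1,\dots,\omega_n\in B\}$ has at least $n$ elements. *)

theory Defs
  imports "HOL-Analysis.Analysis"
begin

definition cmat :: "real^'n^'m \<Rightarrow> complex^'n^'m" where
  "cmat R = (\<chi> i j. complex_of_real (R $ i $ j))"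

definition is_eigenvalue :: "real^'n^'n \<Rightarrow> complex \<Rightarrow> bool" where
  "is_eigenvalue R c \<longleftrightarrow> (\<exists>v. v \<noteq> 0 \<and> cmat R *v v = c *s v)"

definition tau :: "real^'n^'n \<Rightarrow> real^'n \<Rightarrow> real^'n \<Rightarrow> real^'n" where
  "tau R b x = matrix_inv R *v (x + b)"

definition tau_inv :: "real^'n^'n \<Rightarrow> real^'n \<Rightarrow> real^'n \<Rightarrow> real^'n" where
  "tau_inv R b y = R *v y - b"

end

theory Submission
  imports Defs
begin

lemma transl_fix:
  fixes A :: "(real^'d) set"
  assumes "finite A" "A \<noteq> {}" "(\<lambda>a. a + t) ` A = A"
  shows "t = 0"
proof -
  obtain a where a: "a \<in> A" "\<And>b. b \<in> A \<Longrightarrow> b \<bullet> t \<le> a \<bullet> t"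
  proof -
    have "Max ((\<lambda>b. b \<bullet> t) ` A) \<in> (\<lambda>b. b \<bullet> t) ` A" using assms(1,2) by simp
    then obtain a where "a \<in> A" "a \<bullet> t = Max ((\<lambda>b. b \<bullet> t) ` A)" by auto
    then show ?thesis using that assms(1) by auto
  qed
  have "a + t \<in> A" using a(1) assms(3) by blast
  then have "(a + t) \<bullet> t \<le> a \<bullet> t" using a(2) by blast
  then have "t \<bullet> t \<le> 0" by (simp add: inner_add_left)
  then show ?thesis by (metis inner_eq_zero_iff inner_ge_zero order_antisym)
qed

lemma gen_bound:
  fixes F :: "real^'d \<Rightarrow> real^'d \<Rightarrow> real^'d" and L :: "real^'d \<Rightarrow> real^'d"
  assumes F: "\<And>b y. F b y = L y + c b" and L: "inj L" and c: "inj_on c B"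
    and B: "finite B" "card B \<ge> 2"
  shows "card {foldl (\<lambda>y b. F b y) x \<omega> | \<omega>. length \<omega> = n \<and> set \<omega> \<subseteq> B} \<ge> Suc n"
proof (induction n)
  case 0
  have "{foldl (\<lambda>y b. F b y) x \<omega> | \<omega>. length \<omega> = 0 \<and> set \<omega> \<subseteq> B} = {x}" by auto
  then show ?case by simp
next
  case (Suc n)
  define S where "S m = {foldl (\<lambda>y b. F b y) x \<omega> | \<omega>. length \<omega> = m \<and> set \<omega> \<subseteq> B}" for m
  have fin: "finite (S m)" for m
  proof -
    have "S m = (\<lambda>\<omega>. foldl (\<lambda>y b. F b y) x \<omega>) ` {\<omega>. set \<omega> \<subseteq> B \<and> length \<omega> = m}"
      unfolding S_def by blast
    then show ?thesis using finite_lists_length_eq[OF B(1)] by simp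
  qed
  obtain b1 b2 where bb: "b1 \<in> B" "b2 \<in> B" "b1 \<noteq> b2"
    using B card_le_Suc0_iff_eq[OF B(1)] by (metis One_nat_def not_less_eq_eq numeral_2_eq_2)
  have ne: "S m \<noteq> {}" for m
  proof -
    have "foldl (\<lambda>y b. F b y) x (replicate m b1) \<in> S m" unfolding S_def using bb by force
    then show ?thesis by blast
  qed
  have sub: "(F b) ` S n \<subseteq> S (Suc n)" if "b \<in> B" for b
  proof
    fix z assume "z \<in> F b ` S n"
    then obtain \<omega> where "length \<omega> = n" "set \<omega> \<subseteq> B" "z = F b (foldl (\<lambda>y b. F b y) x \<omega>)"
      unfolding S_def by blast
    then have "z = foldl (\<lambda>y b. F b y) x (\<omega> @ [b])" "length (\<omega>@[b]) = Suc n" "set (\<omega>@[b]) \<subseteq> B"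
      using that by auto
    then show "z \<in> S (Suc n)" unfolding S_def by blast
  qed
  have injF: "inj (F b)" for b using L unfolding F inj_def by auto
  have cardF: "card (F b ` S n) = card (S n)" for b
    using injF[of b] by (simp add: card_image inj_on_subset)
  have neq: "F b1 ` S n \<noteq> F b2 ` S n"
  proof
    assume eq: "F b1 ` S n = F b2 ` S n"
    let ?t = "c b1 - c b2"
    have "(\<lambda>a. a + ?t) ` (F b2 ` S n) = F b1 ` S n"
      unfolding F image_image by (simp add: algebra_simps)
    then have "?t = 0" using transl_fix[of "F b2 ` S n" ?t] fin ne eq by auto
    then show False using c bb by (simp add: inj_on_def)
  qed
  have "card (S n) < card (F b1 ` S n \<union> F b2 ` S n)"
  proof -
    have "F b1 ` S n \<subset> F b1 ` S n \<union> F b2 ` S n"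
    proof (rule ccontr)
      assume "\<not> ?thesis"
      then have "F b2 ` S n \<subseteq> F b1 ` S n" by blast
      then have "F b2 ` S n = F b1 ` S n"
        using card_subset_eq[of "F b1 ` S n" "F b2 ` S n"] fin cardF by auto
      then show False using neq by simp
    qed
    then show ?thesis using psubset_card_mono[of _ "F b1 ` S n"] fin cardF[of b1] by auto
  qed
  also have "\<dots> \<le> card (S (Suc n))"
    using sub[OF bb(1)] sub[OF bb(2)] fin by (intro card_mono) auto
  finally show ?case using Suc unfolding S_def by simp
qed

lemma R_invertible:
  fixes R :: "real^'d^'d"
  assumes "\<And>c. is_eigenvalue R c \<Longrightarrow> cmod c > 1"
  shows "invertible R"
proof (rule ccontr)
  assume "\<not> invertible R"
  then obtain v where v: "R *v v = 0" "v \<noteq> 0"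
    using invertible_left_inverse matrix_left_invertible_ker by metis
  define w :: "complex^'d" where "w = (\<chi> i. complex_of_real (v $ i))"
  have "w \<noteq> 0" using v(2) unfolding w_def by (auto simp: vec_eq_iff)
  moreover have "cmat R *v w = 0 *s w"
  proof -
    have "cmat R *v w = (\<chi> i. complex_of_real ((R *v v) $ i))"
      unfolding cmat_def w_def matrix_vector_mult_def by (simp add: vec_eq_iff)
    then show ?thesis using v(1) by (simp add: vec_eq_iff)
  qed
  ultimately have "is_eigenvalue R 0" unfolding is_eigenvalue_def by blast
  then show False using assms by fastforce
qed

theorem lemma6p5:
  fixes R :: "real^'d^'d" and B :: "(real^'d) set" and x :: "real^'d" and n :: nat
  assumes "\<And>c. is_eigenvalue R c \<Longrightarrow> cmod c > 1"
    and "finite B" and "card B \<ge> 2"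
  shows "card {foldl (\<lambda>y b. tau_inv R b y) x \<omega> | \<omega>. length \<omega> = n \<and> set \<omega> \<subseteq> B} \<ge> n \<and>
    card {foldl (\<lambda>y b. tau R b y) x \<omega> | \<omega>. length \<omega> = n \<and> set \<omega> \<subseteq> B} \<ge> n"
proof -
  have inv: "invertible R" using R_invertible assms(1) by blast
  then have RR: "R ** matrix_inv R = mat 1" "matrix_inv R ** R = mat 1"
    unfolding invertible_def matrix_inv_def by (metis (mono_tags, lifting) someI_ex)+
  have injR: "inj ((*v) R)" using inv inj_matrix_vector_mult by blast
  have injRi: "inj ((*v) (matrix_inv R))"
    using RR(1) matrix_left_invertible_injective by blast
  have 1: "card {foldl (\<lambda>y b. tau_inv R b y) x \<omega> | \<omega>. length \<omega> = n \<and> set \<omega> \<subseteq> B} \<ge> Suc n"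
    by (rule gen_bound[where L="(*v) R" and c=uminus])
       (use injR assms(2,3) in \<open>auto simp: tau_inv_def inj_on_def\<close>)
  have 2: "card {foldl (\<lambda>y b. tau R b y) x \<omega> | \<omega>. length \<omega> = n \<and> set \<omega> \<subseteq> B} \<ge> Suc n"
    by (rule gen_bound[where L="(*v) (matrix_inv R)" and c="(*v) (matrix_inv R)"])
       (use injRi assms(2,3) in \<open>auto simp: tau_def matrix_vector_right_distrib inj_on_def inj_def\<close>)
  show ?thesis using 1 2 by simp
qed

end
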